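(* Let $n\ge 6$ and let $e$ be any hyperedge of the Turán hypergraph $T(n,3,2)$. Then $\mathcal{E_S}(T(n,3,2))>\mathcal{E_S}(T(n,3,2)-e)$.
   Context: For a hypergraph $\mathcal{H}$ and distinct vertices $i,j$, the co-degree $c_{ij}$ is the number of hyperedges containing both $i$ and $j$. The Seidel matrix $\mathcal{S}(\mathcal{H})$ has zero diagonal and $(i,j)$-entry $1-2c_{ij}$ for $i\neq j$; the Seidel energy $\mathcal{E_S}(\mathcal{H})$ is the sum of the absolute values of its eigenvalues. The Turán hypergraph $T(n,3,2)$ has $n$ vertices partitioned into two parts $V_1,V_2$ whose sizes differ by at most $1$, and its hyperedges are all $3$-element vertex subsets meeting both $V_1$ and $V_2$ (i.e. it is the complete $3$-uniform bipartite hypergraph with parts of sizes $\lceil n/2\rceil,\lfloor n/2\rfloor$). For a hyperedge $e$, $\mathcal{H}-e$ denotes the hypergraph with the same vertex set and hyperedge set $E(\mathcal{H})\setminus\{e\}$. *)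

theory Defs
  imports "Jordan_Normal_Form.Char_Poly" "HOL-Computational_Algebra.Fundamental_Theorem_Algebra"
begin

text \<open>A hypergraph on vertex set {0..<n} is given by its set of hyperedges E (sets of vertices).\<close>

definition codegree :: "nat set set \<Rightarrow> nat \<Rightarrow> nat \<Rightarrow> nat" where
  "codegree E i j = card {e \<in> E. i \<in> e \<and> j \<in> e}"

definition seidel_matrix :: "nat \<Rightarrow> nat set set \<Rightarrow> real mat" where
  "seidel_matrix n E = mat n n (\<lambda>(i, j). if i = j then 0 else 1 - 2 * real (codegree E i j))"

text \<open>Seidel energy: sum of absolute values of the eigenvalues (with multiplicity),
  i.e. of the roots of the characteristic polynomial (all real, the matrix being symmetric).\<close>
definition seidel_energy :: "nat \<Rightarrow> nat set set \<Rightarrow> real" where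
  "seidel_energy n E =
     sum_mset (image_mset cmod (proots (char_poly (map_mat complex_of_real (seidel_matrix n E)))))"

text \<open>Turan hypergraph T(n,3,2) on {0..<n}: parts V1 = {0..<ceil(n/2)}, V2 = the rest.\<close>
definition turan_part1 :: "nat \<Rightarrow> nat set" where
  "turan_part1 n = {0..<(n + 1) div 2}"

definition turan_part2 :: "nat \<Rightarrow> nat set" where
  "turan_part2 n = {(n + 1) div 2..<n}"

definition turan_edges :: "nat \<Rightarrow> nat set set" where
  "turan_edges n = {e. e \<subseteq> {0..<n} \<and> card e = 3 \<and>
      e \<inter> turan_part1 n \<noteq> {} \<and> e \<inter> turan_part2 n \<noteq> {}}"

end

theory Submission
  imports Defs
begin

definition cD0 :: "real \<Rightarrow> real \<Rightarrow> real" where "cD0 s t = (307 - 591 * t + 380 * t^2 - 84 * t^3 - 291 * s + 556 * s * t - 294 * s * t^2 + 48 * s * t^3 + 8 * s * t^4 + 136 * s^2 - 334 * s^2 * t + 4 * s^2 * t^2 + 56 * s^2 * t^3 - 16 * s^2 * t^4 - 28 * s^3 + 104 * s^3 * t + 56 * s^3 * t^2 - 16 * s^3 * t^3 - 8 * s^4 * t - 16 * s^4 * t^2)"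

definition cD1 :: "real \<Rightarrow> real \<Rightarrow> real" where "cD1 s t = (-130 + 85 * t + 52 * t^2 - 20 * t^3 + 173 * s - 40 * s * t - 8 * s * t^2 - 28 * s * t^3 + 8 * s * t^4 - 32 * s^2 + 8 * s^2 * t - 40 * s^2 * t^2 + 16 * s^2 * t^3 - 4 * s^3 - 28 * s^3 * t + 16 * s^3 * t^2 + 8 * s^4 * t)"

definition cD2 :: "real \<Rightarrow> real \<Rightarrow> real" where "cD2 s t = (-52 + 15 * t + 8 * t^2 + 11 * s + 6 * s * t^2 - 4 * s * t^3 + 8 * s^2 + 6 * s^2 * t - 4 * s^2 * t^2 - 4 * s^3 * t)"

definition cD3 :: "real \<Rightarrow> real \<Rightarrow> real" where "cD3 s t = (2 - 5 * t - 5 * s + 4 * s * t)"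

definition cC0 :: "real \<Rightarrow> real \<Rightarrow> real" where "cC0 s t = (1 - 3 * t + 2 * t^2 - 3 * s - 16 * s * t + 14 * s * t^2 - 4 * s * t^3 + 2 * s^2 + 14 * s^2 * t - 4 * s^2 * t^2 - 4 * s^3 * t)"

definition cC1 :: "real \<Rightarrow> real \<Rightarrow> real" where "cC1 s t = (2 - 3 * t - 3 * s + 4 * s * t)"

definition ch1 :: "real \<Rightarrow> real \<Rightarrow> real" where "ch1 s t = (-2 * t - 2 * s)"

definition ch0 :: "real \<Rightarrow> real \<Rightarrow> real" where "ch0 s t = (-53 + 22 * t + 18 * s + 4 * s * t)"

definition cal :: "real \<Rightarrow> real \<Rightarrow> real" where "cal s t = (-24 - 116 * t + 112 * t^2 - 16 * t^3 - 20 * s + 272 * s * t - 112 * s * t^2 + 16 * s^2 - 80 * s^2 * t)"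

definition cbe :: "real \<Rightarrow> real \<Rightarrow> real" where "cbe s t = (360 - 772 * t + 552 * t^2 - 128 * t^3 - 468 * s - 176 * s * t + 776 * s * t^2 - 480 * s * t^3 + 96 * s * t^4 + 296 * s^2 + 664 * s^2 * t - 704 * s^2 * t^2 + 160 * s^2 * t^3 - 64 * s^3 - 368 * s^3 * t + 160 * s^3 * t^2 + 64 * s^4 * t)"

definition Q4val :: "real \<Rightarrow> real \<Rightarrow> real \<Rightarrow> real" where "Q4val s t x = x^4 + cD3 s t * x^3 + cD2 s t * x^2 + cD1 s t * x + cD0 s t"
lemmas cdefs = cD0_def cD1_def cD2_def cD3_def cC0_def cC1_def ch1_def ch0_def cal_def cbe_def Q4val_def
lemma pos_D0neg_e: assumes k: "(k::real) \<ge> 0" shows "0 < - cD0 (k+3) (k+3)"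
proof -
  have "- cD0 (k+3) (k+3) = 7811 + 22206 * k + 25244 * k^2 + 14708 * k^3 + 4644 * k^4 + 752 * k^5 + 48 * k^6"
    by (simp add: cdefs algebra_simps power2_eq_square power3_eq_cube power4_eq_xxxx eval_nat_numeral)
  also have "\<dots> > 0" using k by (simp add: add_pos_nonneg)
  finally show ?thesis .
qed

lemma pos_al_e: assumes k: "(k::real) \<ge> 0" shows "0 < - cal (k+3) (k+3)"
proof -
  have "- cal (k+3) (k+3) = 2448 + 3352 * k + 1472 * k^2 + 208 * k^3"
    by (simp add: cdefs algebra_simps power2_eq_square power3_eq_cube power4_eq_xxxx eval_nat_numeral)
  also have "\<dots> > 0" using k by (simp add: add_pos_nonneg)
  finally show ?thesis .
qed

lemma pos_be_e: assumes k: "(k::real) \<ge> 0" shows "0 < cbe (k+3) (k+3)"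
proof -
  have "cbe (k+3) (k+3) = 27312 + 63272 * k + 57696 * k^2 + 25824 * k^3 + 5648 * k^4 + 480 * k^5"
    by (simp add: cdefs algebra_simps power2_eq_square power3_eq_cube power4_eq_xxxx eval_nat_numeral)
  also have "\<dots> > 0" using k by (simp add: add_pos_nonneg)
  finally show ?thesis .
qed

lemma pos_C0_e: assumes k: "(k::real) \<ge> 0" shows "0 < - cC0 (k+3) (k+3)"
proof -
  have "- cC0 (k+3) (k+3) = 341 + 618 * k + 408 * k^2 + 116 * k^3 + 12 * k^4"
    by (simp add: cdefs algebra_simps power2_eq_square power3_eq_cube power4_eq_xxxx eval_nat_numeral)
  also have "\<dots> > 0" using k by (simp add: add_pos_nonneg)
  finally show ?thesis .
qed

lemma pos_p1_e: assumes k: "(k::real) \<ge> 0" shows "0 < Q4val (k+3) (k+3) (2*k+5)"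
proof -
  have "Q4val (k+3) (k+3) (2*k+5) = 384 + 1152 * k + 1248 * k^2 + 576 * k^3 + 96 * k^4"
    by (simp add: cdefs algebra_simps power2_eq_square power3_eq_cube power4_eq_xxxx eval_nat_numeral)
  also have "\<dots> > 0" using k by (simp add: add_pos_nonneg)
  finally show ?thesis .
qed

lemma pos_p2_e: assumes k: "(k::real) \<ge> 0" shows "0 < - Q4val (k+3) (k+3) (4*k+9)"
proof -
  have "- Q4val (k+3) (k+3) (4*k+9) = 800 + 3952 * k + 6672 * k^2 + 5520 * k^3 + 2432 * k^4 + 544 * k^5 + 48 * k^6"
    by (simp add: cdefs algebra_simps power2_eq_square power3_eq_cube power4_eq_xxxx eval_nat_numeral)
  also have "\<dots> > 0" using k by (simp add: add_pos_nonneg)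
  finally show ?thesis .
qed

lemma pos_D0neg_a: assumes k: "(k::real) \<ge> 0" shows "0 < - cD0 (k+4) (k+3)"
proof -
  have "- cD0 (k+4) (k+3) = 27662 + 61456 * k + 55486 * k^2 + 26052 * k^3 + 6708 * k^4 + 896 * k^5 + 48 * k^6"
    by (simp add: cdefs algebra_simps power2_eq_square power3_eq_cube power4_eq_xxxx eval_nat_numeral)
  also have "\<dots> > 0" using k by (simp add: add_pos_nonneg)
  finally show ?thesis .
qed

lemma pos_al_a: assumes k: "(k::real) \<ge> 0" shows "0 < - cal (k+4) (k+3)"
proof -
  have "- cal (k+4) (k+3) = 4228 + 4760 * k + 1744 * k^2 + 208 * k^3"
    by (simp add: cdefs algebra_simps power2_eq_square power3_eq_cube power4_eq_xxxx eval_nat_numeral)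
  also have "\<dots> > 0" using k by (simp add: add_pos_nonneg)
  finally show ?thesis .
qed

lemma pos_be_a: assumes k: "(k::real) \<ge> 0" shows "0 < cbe (k+4) (k+3)"
proof -
  have "cbe (k+4) (k+3) = 73684 + 138256 * k + 102712 * k^2 + 37680 * k^3 + 6800 * k^4 + 480 * k^5"
    by (simp add: cdefs algebra_simps power2_eq_square power3_eq_cube power4_eq_xxxx eval_nat_numeral)
  also have "\<dots> > 0" using k by (simp add: add_pos_nonneg)
  finally show ?thesis .
qed

lemma pos_C0_a: assumes k: "(k::real) \<ge> 0" shows "0 < - cC0 (k+4) (k+3)"
proof -
  have "- cC0 (k+4) (k+3) = 762 + 1112 * k + 598 * k^2 + 140 * k^3 + 12 * k^4"
    by (simp add: cdefs algebra_simps power2_eq_square power3_eq_cube power4_eq_xxxx eval_nat_numeral)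
  also have "\<dots> > 0" using k by (simp add: add_pos_nonneg)
  finally show ?thesis .
qed

lemma pos_p1_a: assumes k: "(k::real) \<ge> 0" shows "0 < Q4val (k+4) (k+3) (2*k+5)"
proof -
  have "Q4val (k+4) (k+3) (2*k+5) = 448 + 1008 * k + 872 * k^2 + 336 * k^3 + 48 * k^4"
    by (simp add: cdefs algebra_simps power2_eq_square power3_eq_cube power4_eq_xxxx eval_nat_numeral)
  also have "\<dots> > 0" using k by (simp add: add_pos_nonneg)
  finally show ?thesis .
qed

lemma pos_p2_a: assumes k: "(k::real) \<ge> 0" shows "0 < - Q4val (k+4) (k+3) (4*k+11)"
proof -
  have "- Q4val (k+4) (k+3) (4*k+11) = 5024 + 15648 * k + 19096 * k^2 + 11848 * k^3 + 3976 * k^4 + 688 * k^5 + 48 * k^6"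
    by (simp add: cdefs algebra_simps power2_eq_square power3_eq_cube power4_eq_xxxx eval_nat_numeral)
  also have "\<dots> > 0" using k by (simp add: add_pos_nonneg)
  finally show ?thesis .
qed

lemma pos_D0neg_b: assumes k: "(k::real) \<ge> 0" shows "0 < - cD0 (k+3) (k+4)"
proof -
  have "- cD0 (k+3) (k+4) = 25446 + 57776 * k + 53270 * k^2 + 25492 * k^3 + 6660 * k^4 + 896 * k^5 + 48 * k^6"
    by (simp add: cdefs algebra_simps power2_eq_square power3_eq_cube power4_eq_xxxx eval_nat_numeral)
  also have "\<dots> > 0" using k by (simp add: add_pos_nonneg)
  finally show ?thesis .
qed

lemma pos_al_b: assumes k: "(k::real) \<ge> 0" shows "0 < - cal (k+3) (k+4)"
proof -
  have "- cal (k+3) (k+4) = 4628 + 5128 * k + 1824 * k^2 + 208 * k^3"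
    by (simp add: cdefs algebra_simps power2_eq_square power3_eq_cube power4_eq_xxxx eval_nat_numeral)
  also have "\<dots> > 0" using k by (simp add: add_pos_nonneg)
  finally show ?thesis .
qed

lemma pos_be_b: assumes k: "(k::real) \<ge> 0" shows "0 < cbe (k+3) (k+4)"
proof -
  have "cbe (k+3) (k+4) = 78948 + 146384 * k + 107320 * k^2 + 38800 * k^3 + 6896 * k^4 + 480 * k^5"
    by (simp add: cdefs algebra_simps power2_eq_square power3_eq_cube power4_eq_xxxx eval_nat_numeral)
  also have "\<dots> > 0" using k by (simp add: add_pos_nonneg)
  finally show ?thesis .
qed

lemma pos_C0_b: assumes k: "(k::real) \<ge> 0" shows "0 < - cC0 (k+3) (k+4)"
proof -
  have "- cC0 (k+3) (k+4) = 762 + 1112 * k + 598 * k^2 + 140 * k^3 + 12 * k^4"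
    by (simp add: cdefs algebra_simps power2_eq_square power3_eq_cube power4_eq_xxxx eval_nat_numeral)
  also have "\<dots> > 0" using k by (simp add: add_pos_nonneg)
  finally show ?thesis .
qed

lemma pos_p1_b: assumes k: "(k::real) \<ge> 0" shows "0 < Q4val (k+3) (k+4) (2*k+5)"
proof -
  have "Q4val (k+3) (k+4) (2*k+5) = 1344 + 2800 * k + 2224 * k^2 + 768 * k^3 + 96 * k^4"
    by (simp add: cdefs algebra_simps power2_eq_square power3_eq_cube power4_eq_xxxx eval_nat_numeral)
  also have "\<dots> > 0" using k by (simp add: add_pos_nonneg)
  finally show ?thesis .
qed

lemma pos_p2_b: assumes k: "(k::real) \<ge> 0" shows "0 < - Q4val (k+3) (k+4) (4*k+11)"
proof -
  have "- Q4val (k+3) (k+4) (4*k+11) = 5448 + 15832 * k + 18640 * k^2 + 11544 * k^3 + 3928 * k^4 + 688 * k^5 + 48 * k^6"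
    by (simp add: cdefs algebra_simps power2_eq_square power3_eq_cube power4_eq_xxxx eval_nat_numeral)
  also have "\<dots> > 0" using k by (simp add: add_pos_nonneg)
  finally show ?thesis .
qed

lemma Q4_div: "Q4val s t x = (x^2 + cC1 s t * x + cC0 s t) * (x^2 + ch1 s t * x + ch0 s t) + cal s t * x + cbe s t"
  by (simp add: cdefs algebra_simps power2_eq_square power3_eq_cube power4_eq_xxxx eval_nat_numeral)

definition Fmat :: "nat \<Rightarrow> (nat \<Rightarrow> nat) \<Rightarrow> (nat \<Rightarrow> nat \<Rightarrow> real) \<Rightarrow> (nat \<Rightarrow> real) \<Rightarrow> real mat" where
  "Fmat n c F w = mat n n (\<lambda>(i,j). w i * F (c i) (c j) - (if i = j then F (c i) (c i) else 0))"

lemma Fmat_dim[simp]: "dim_row (Fmat n c F w) = n" "dim_col (Fmat n c F w) = n"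
  unfolding Fmat_def by auto

lemma Fmat_carrier[simp]: "Fmat n c F w \<in> carrier_mat n n"
  unfolding Fmat_def by auto

lemma char_poly_col: fixes A :: "'a :: idom mat"
  assumes 0: "\<And> j. j < n \<Longrightarrow> j \<noteq> i \<Longrightarrow> A $$ (j,i) = 0"
  and A: "A \<in> carrier_mat n n"
  and i: "i < n"
shows "char_poly A = [: - A $$ (i,i), 1:] * char_poly (mat_delete A i i)"
proof -
  let ?A = "mat_delete A i i"
  let ?sum = "[:0, 1:] \<cdot>\<^sub>m 1\<^sub>m n + map_mat (\<lambda>a. [:- a:]) A"
  define Sum where "Sum = ?sum"
  let ?f = "\<lambda> j. Sum $$ (j, i) * cofactor Sum j i"
  have Sum: "Sum \<in> carrier_mat n n" using A unfolding Sum_def by auto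
  from A have id: "dim_row A = n" by auto
  have "char_poly A = (\<Sum>j<n. ?f j)"
    unfolding char_poly_def[of A] char_poly_matrix_def
    using laplace_expansion_column[OF Sum i] unfolding Sum_def using A by simp
  also have "\<dots> = ?f i + sum ?f ({..<n} - {i})"
    by (rule sum.remove[of _ i], insert i, auto)
  also have "\<dots> = ?f i"
  proof (subst sum.neutral, intro ballI)
    fix j
    assume "j \<in> {..<n} - {i}"
    hence j: "j < n" and ji: "j \<noteq> i" by auto
    show "?f j = 0" unfolding Sum_def using ji j i A 0[OF j ji] by simp
  qed simp
  also have "?f i = [:- A $$ (i,i), 1:] * (cofactor Sum i i)"
    unfolding Sum_def using i A by simp
  also have "cofactor Sum i i = det (mat_delete Sum i i)"
    unfolding cofactor_def by simp
  also have "\<dots> = char_poly ?A"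
    unfolding char_poly_def char_poly_matrix_def Sum_def
  proof (rule arg_cong[of _ _ det])
    show "mat_delete ?sum i i = [:0, 1:] \<cdot>\<^sub>m 1\<^sub>m (dim_row ?A) + map_mat (\<lambda>a. [:- a:]) ?A"
      using i A by (auto simp: mat_delete_def)
  qed
  finally show ?thesis .
qed

lemma det1: "det (mat (Suc 0) (Suc 0) g) = (g (0,0) :: 'a :: comm_ring_1)"
  by (subst det_upper_triangular[of _ 1]) (auto simp: upper_triangular_def diag_mat_def)

lemma det2: "det (mat 2 2 f) = (f (0,0) * f (1,1) - f (0,1) * f (1,0) :: 'a :: comm_ring_1)"
  apply (subst laplace_expansion_row[of _ 2 0])
  apply (auto simp: cofactor_def mat_delete_def numeral_2_eq_2 lessThan_Suc det1)
  done

definition d3 :: "(nat \<times> nat \<Rightarrow> 'a :: comm_ring_1) \<Rightarrow> 'a" where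
  "d3 f = f (0,0) * (f (1,1) * f(2,2) - f (1,2) * f (2,1))
   - f (0,1) * (f (1,0) * f(2,2) - f (1,2) * f (2,0)) + f (0,2) * (f (1,0) * f(2,1) - f (1,1) * f (2,0))"

lemma det3: "det (mat 3 3 f) = d3 f"
  unfolding d3_def
  apply (subst laplace_expansion_row[of _ 3 0])
    apply (auto simp: cofactor_def mat_delete_def numeral_3_eq_3 lessThan_Suc)
  apply (subst (1 2 3) det2[unfolded numeral_2_eq_2])
  apply (simp add: numeral_2_eq_2 algebra_simps)
  done

lemma mat_delete_0: "j < n \<Longrightarrow> mat_delete (mat n n f) 0 j = mat (n-1) (n-1) (\<lambda>(i',j'). f (Suc i', if j' < j then j' else Suc j'))"
  by (rule eq_matI) (auto simp: mat_delete_def)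

lemma det4: "det (mat 4 4 f) = f (0,0) * d3 (\<lambda>(i,j). f (Suc i, if j < 0 then j else Suc j))
   - f (0,1) * d3 (\<lambda>(i,j). f (Suc i, if j < 1 then j else Suc j))
   + f (0,2) * d3 (\<lambda>(i,j). f (Suc i, if j < 2 then j else Suc j))
   - f (0,3) * d3 (\<lambda>(i,j). f (Suc i, if j < 3 then j else Suc j))"
proof -
  have "det (mat 4 4 f) = (\<Sum>j<4. mat 4 4 f $$ (0,j) * cofactor (mat 4 4 f) 0 j)"
    by (rule laplace_expansion_row) auto
  also have "\<dots> = (\<Sum>j<4. f (0,j) * ((-1)^j * d3 (\<lambda>(i',j'). f (Suc i', if j' < j then j' else Suc j'))))"
  proof (rule sum.cong[OF refl])
    fix j assume j: "j \<in> {..<(4::nat)}"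
    have "cofactor (mat 4 4 f) 0 j = (-1)^j * det (mat 3 3 (\<lambda>(i',j'). f (Suc i', if j' < j then j' else Suc j')))"
      unfolding cofactor_def using j by (simp add: mat_delete_0)
    then show "mat 4 4 f $$ (0,j) * cofactor (mat 4 4 f) 0 j = f (0,j) * ((-1)^j * d3 (\<lambda>(i',j'). f (Suc i', if j' < j then j' else Suc j')))"
      using j by (simp add: det3)
  qed
  also have "\<dots> = f (0,0) * d3 (\<lambda>(i,j). f (Suc i, if j < 0 then j else Suc j))
   - f (0,1) * d3 (\<lambda>(i,j). f (Suc i, if j < 1 then j else Suc j))
   + f (0,2) * d3 (\<lambda>(i,j). f (Suc i, if j < 2 then j else Suc j))
   - f (0,3) * d3 (\<lambda>(i,j). f (Suc i, if j < 3 then j else Suc j))"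
    by (simp add: eval_nat_numeral lessThan_Suc)
  finally show ?thesis .
qed

lemma deflate:
  assumes j: "j < n" and cj: "c j = c n"
  shows "char_poly (Fmat (Suc n) c F w) = [:F (c n) (c n), 1:] * char_poly (Fmat n c F (w(j := w j + w n)))"
proof -
  let ?A = "Fmat (Suc n) c F w"
  define B where "B = add_col_sub_row (-1) j n ?A"
  have A: "?A \<in> carrier_mat (Suc n) (Suc n)" by simp
  have B: "B \<in> carrier_mat (Suc n) (Suc n)" unfolding B_def by (rule add_col_sub_row_carrier(3)[OF A])
  have sim: "similar_mat B ?A" unfolding B_def
    by (rule add_col_sub_row_similar[OF A]) (use j in auto)
  have Aentry: "?A $$ (r,k) = w r * F (c r) (c k) - (if r = k then F (c r) (c r) else 0)" if "r < Suc n" "k < Suc n" for r k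
    using that unfolding Fmat_def by auto
  have Bentry: "B $$ (r,k) = (if 
      r = j \<and> k = n then ?A $$ (r, k) - ?A $$ (r, r) - ?A $$ (k, r) + ?A $$ (k, k) else if
      r = j \<and> k \<noteq> n then ?A $$ (r, k) + ?A $$ (n, k) else if
      r \<noteq> j \<and> k = n then ?A $$ (r, k) - ?A $$ (r, j) else ?A $$ (r,k))" if "r < Suc n" "k < Suc n" for r k
    unfolding B_def using that j by (subst add_col_sub_index_row) auto
  have col0: "B $$ (r,n) = 0" if "r < Suc n" "r \<noteq> n" for r
    using that j cj by (auto simp: Bentry Aentry)
  have colnn: "B $$ (n,n) = - F (c n) (c n)"
    using j cj by (auto simp: Bentry Aentry)
  have "char_poly ?A = char_poly B" by (rule char_poly_similar[OF sim, symmetric])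
  also have "\<dots> = [: - B $$ (n,n), 1:] * char_poly (mat_delete B n n)"
    by (rule char_poly_col[OF col0 B]) auto
  also have "mat_delete B n n = Fmat n c F (w(j := w j + w n))"
  proof (rule eq_matI)
    fix r k assume r: "r < dim_row (Fmat n c F (w(j := w j + w n)))"
      and k: "k < dim_col (Fmat n c F (w(j := w j + w n)))"
    hence r: "r < n" and k: "k < n" by (auto simp: Fmat_def)
    have "mat_delete B n n $$ (r,k) = B $$ (r,k)"
      using r k B by (auto simp: mat_delete_def)
    also have "\<dots> = Fmat n c F (w(j := w j + w n)) $$ (r,k)"
      using r k j cj by (auto simp: Bentry Aentry Fmat_def algebra_simps)
    finally show "mat_delete B n n $$ (r,k) = Fmat n c F (w(j := w j + w n)) $$ (r,k)" .
  qed (use B in \<open>auto simp: mat_delete_def Fmat_def\<close>)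
  finally show ?thesis using colnn by simp
qed
lemma Fmat_cong: "(\<And>i. i < n \<Longrightarrow> w i = w' i) \<Longrightarrow> Fmat n c F w = Fmat n c F w'"
  unfolding Fmat_def by (rule eq_matI) auto

lemma Fmat_cong2: "(\<And>i. i < n \<Longrightarrow> w i = w' i) \<Longrightarrow> (\<And>i. i < n \<Longrightarrow> c i = c' i) \<Longrightarrow> Fmat n c F w = Fmat n c' F w'"
  unfolding Fmat_def by (rule eq_matI) auto

lemma deflate_all:
  assumes "k \<le> m" "\<And>r. k \<le> r \<Longrightarrow> r < m \<Longrightarrow> c r < k" "\<And>p. p < k \<Longrightarrow> c p = p"
  shows "char_poly (Fmat m c F w) = (\<Prod>r\<in>{k..<m}. [:F (c r) (c r), 1:]) *
     char_poly (Fmat k c F (\<lambda>p. w p + (\<Sum>r\<in>{k..<m}. if c r = p then w r else 0)))"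
  using assms
proof (induction m arbitrary: w)
  case 0
  then show ?case by simp
next
  case (Suc m)
  show ?case
  proof (cases "k = Suc m")
    case True
    then show ?thesis by simp
  next
    case False
    with Suc.prems have km: "k \<le> m" by simp
    define j where "j = c m"
    have j: "j < m" "j < k" using Suc.prems(2)[of m] km unfolding j_def by auto
    have cj: "c j = c m" using Suc.prems(3)[OF j(2)] unfolding j_def by simp
    have e1: "char_poly (Fmat (Suc m) c F w) = [:F (c m) (c m), 1:] * char_poly (Fmat m c F (w(j := w j + w m)))"
      by (rule deflate[OF j(1) cj])
    have e2: "char_poly (Fmat m c F (w(j := w j + w m))) = (\<Prod>r\<in>{k..<m}. [:F (c r) (c r), 1:]) *
     char_poly (Fmat k c F (\<lambda>p. (w(j := w j + w m)) p + (\<Sum>r\<in>{k..<m}. if c r = p then (w(j := w j + w m)) r else 0)))"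
      by (rule Suc.IH) (use km Suc.prems in auto)
    have e3: "Fmat k c F (\<lambda>p. (w(j := w j + w m)) p + (\<Sum>r\<in>{k..<m}. if c r = p then (w(j := w j + w m)) r else 0))
       = Fmat k c F (\<lambda>p. w p + (\<Sum>r\<in>{k..<Suc m}. if c r = p then w r else 0))"
    proof (rule Fmat_cong)
      fix p assume p: "p < k"
      have "(\<Sum>r\<in>{k..<m}. if c r = p then (w(j := w j + w m)) r else 0) = (\<Sum>r\<in>{k..<m}. if c r = p then w r else 0)"
        by (rule sum.cong) (use j in auto)
      then show "(w(j := w j + w m)) p + (\<Sum>r\<in>{k..<m}. if c r = p then (w(j := w j + w m)) r else 0)
        = w p + (\<Sum>r\<in>{k..<Suc m}. if c r = p then w r else 0)"
        using km by (simp add: sum.atLeastLessThan_Suc j_def)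
    qed
    have e4: "(\<Prod>r\<in>{k..<Suc m}. [:F (c r) (c r), 1:]) = (\<Prod>r\<in>{k..<m}. [:F (c r) (c r), 1:]) * [:F (c m) (c m), 1:]"
      using km by simp
    show ?thesis unfolding e1 e2 e3 e4 by (simp only: ac_simps)
  qed
qed
lemma det_perm_both: fixes M :: "'a :: comm_ring_1 mat"
  assumes M: "M \<in> carrier_mat n n" and p: "p permutes {0..<n}"
  shows "det (mat n n (\<lambda>(i,j). M $$ (p i, p j))) = det M"
proof -
  define M' where "M' = mat n n (\<lambda>(i,j). M $$ (i, p j))"
  have M': "M' \<in> carrier_mat n n" unfolding M'_def by simp
  have pn: "i < n \<Longrightarrow> p i < n" for i using permutes_in_image[OF p] by auto
  have "mat n n (\<lambda>(i,j). M $$ (p i, p j)) = mat n n (\<lambda>(i,j). M' $$ (p i, j))"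
    unfolding M'_def by (rule eq_matI) (auto simp: pn)
  hence "det (mat n n (\<lambda>(i,j). M $$ (p i, p j))) = signof p * det M'"
    using det_permute_rows[OF M' p] by simp
  also have "det M' = det (transpose_mat M')" using det_transpose[OF M'] by simp
  also have "transpose_mat M' = mat n n (\<lambda>(i,j). (transpose_mat M) $$ (p i, j))"
    unfolding M'_def using M by (intro eq_matI) (auto simp: pn)
  also have "det \<dots> = signof p * det (transpose_mat M)"
    by (rule det_permute_rows[OF _ p]) (use M in auto)
  also have "det (transpose_mat M) = det M" using det_transpose[OF M] by simp
  finally have "det (mat n n (\<lambda>(i,j). M $$ (p i, p j))) = (signof p * signof p) * det M" by (simp add: ac_simps)
  also have "signof p * signof p = (1 :: 'a)" by (cases p rule: sign_cases) auto
  finally show ?thesis by simp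
qed

lemma char_poly_perm: fixes A :: "'a :: comm_ring_1 mat"
  assumes A: "A \<in> carrier_mat n n" and p: "p permutes {0..<n}"
  shows "char_poly (mat n n (\<lambda>(i,j). A $$ (p i, p j))) = char_poly A"
proof -
  have pn: "i < n \<Longrightarrow> p i < n" for i using permutes_in_image[OF p] by auto
  have inj: "i < n \<Longrightarrow> j < n \<Longrightarrow> p i = p j \<longleftrightarrow> i = j" for i j
    using permutes_inj[OF p] by (auto dest: injD)
  have "char_poly_matrix (mat n n (\<lambda>(i,j). A $$ (p i, p j))) =
    mat n n (\<lambda>(i,j). (char_poly_matrix A) $$ (p i, p j))"
    using A by (intro eq_matI) (auto simp: char_poly_matrix_def pn inj)
  then show ?thesis unfolding char_poly_def
    using det_perm_both[OF _ p, of "char_poly_matrix A"] A by simp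
qed
lemma sum_mset_image_sum_single:
  "finite A \<Longrightarrow> sum_mset (image_mset g (\<Sum>x\<in>A. {#h x#})) = (\<Sum>x\<in>A. g (h x))"
  by (induction A rule: finite_induct) auto

interpretation rp: map_poly_comm_ring_hom "complex_of_real" ..

lemma energy_lin: fixes A :: "real mat" and k :: nat
  assumes A: "A \<in> carrier_mat n n" and fin: "finite R"
    and cp: "char_poly A = (\<Prod>r\<in>R. [:f r, 1:]) * (\<Prod>i<k. [:- \<rho> i, 1:])"
  shows "sum_mset (image_mset cmod (proots (char_poly (map_mat complex_of_real A))))
     = (\<Sum>r\<in>R. \<bar>f r\<bar>) + (\<Sum>i<k. \<bar>\<rho> i\<bar>)"
proof -
  have "char_poly (map_mat complex_of_real A) = map_poly complex_of_real (char_poly A)"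
    using of_real_hom.char_poly_hom[OF A] by simp
  also have "\<dots> = (\<Prod>r\<in>R. [:complex_of_real (f r), 1:]) * (\<Prod>i<k. [:- complex_of_real (\<rho> i), 1:])"
    unfolding cp by (simp add: rp.hom_mult rp.hom_prod)
  finally have e: "char_poly (map_mat complex_of_real A) = \<dots>" .
  have "proots (char_poly (map_mat complex_of_real A)) =
     (\<Sum>r\<in>R. {# - complex_of_real (f r) #}) + (\<Sum>i<k. {# complex_of_real (\<rho> i) #})"
    unfolding e by (subst proots_mult) (auto simp: proots_prod fin prod_zero_iff)
  then show ?thesis by (simp add: sum_mset_image_sum_single fin)
qed
lemma deg1_poly: "degree (p :: real poly) \<le> 1 \<Longrightarrow> p = [:coeff p 0, coeff p 1:]"
  by (rule poly_eqI) (auto simp: coeff_pCons coeff_eq_0 split: nat.split)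

lemma root_factor: "poly (p :: real poly) r = 0 \<Longrightarrow> \<exists>q. p = [:-r, 1:] * q"
  using poly_eq_0_iff_dvd[of p r] unfolding dvd_def by blast

lemma quartic_roots:
  fixes Ca Cb Cc Cd lo pa pb :: real
  assumes lo: "lo < 0" and pa: "0 < pa" and pab: "pa < pb"
    and Q: "Q = [:Ca, Cb, Cc, Cd, 1:]"
    and s0: "poly Q lo > 0" and s1: "poly Q 0 < 0" and s2: "poly Q pa > 0" and s3: "poly Q pb < 0"
  shows "\<exists>\<rho>. Q = (\<Prod>i<(4::nat). [:- \<rho> i, 1:]) \<and> lo < \<rho> 0 \<and> \<rho> 0 < 0 \<and> 0 < \<rho> 1 \<and> 0 < \<rho> 2 \<and> 0 < \<rho> 3
     \<and> \<rho> 0 + \<rho> 1 + \<rho> 2 + \<rho> 3 = - Cd"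
proof -
  obtain r1 where r1: "lo < r1" "r1 < 0" "poly Q r1 = 0" using poly_IVT_neg[OF lo s0 s1] by auto
  obtain r2 where r2: "0 < r2" "r2 < pa" "poly Q r2 = 0" using poly_IVT_pos[OF pa s1 s2] by auto
  obtain r3 where r3: "pa < r3" "r3 < pb" "poly Q r3 = 0" using poly_IVT_neg[OF pab s2 s3] by auto
  obtain Q1 where Q1: "Q = [:-r1, 1:] * Q1" using root_factor[OF r1(3)] by auto
  have "poly Q1 r2 = 0" using r2(3) r1 r2 unfolding Q1 by simp
  then obtain Q2 where Q2: "Q1 = [:-r2, 1:] * Q2" using root_factor by blast
  have "poly Q2 r3 = 0" using r3(3) r1 r2 r3 pa unfolding Q1 Q2 by simp
  then obtain Q3 where Q3: "Q2 = [:-r3, 1:] * Q3" using root_factor by blast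
  have QQ: "Q = [:-r1, 1:] * [:-r2, 1:] * [:-r3, 1:] * Q3" by (simp only: Q1 Q2 Q3 mult.assoc)
  have "Q3 \<noteq> 0" using QQ Q by auto
  have "degree Q = 4" unfolding Q by simp
  also have "degree Q = degree ([:-r1, 1:] * [:-r2, 1:] * [:-r3, 1:]) + degree Q3"
    unfolding QQ using \<open>Q3 \<noteq> 0\<close> by (subst degree_mult_eq) auto
  also have "degree ([:-r1, 1:] * [:-r2, 1:] * [:-r3, 1:]) = 3"
    by (simp add: degree_mult_eq)
  finally have "degree Q3 = 1" by simp
  then have Q3e: "Q3 = [:coeff Q3 0, coeff Q3 1:]" by (intro deg1_poly) simp
  define u where "u = coeff Q3 0"
  define v where "v = coeff Q3 1"
  have "[:Ca, Cb, Cc, Cd, 1:] = [:-r1, 1:] * [:-r2, 1:] * [:-r3, 1:] * [:u, v:]"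
    using QQ Q3e unfolding Q u_def v_def by simp
  then have cc: "Cd + (r1 * v + (r2 * v + r3 * v)) = u \<and> v = 1"
    by (simp add: algebra_simps) (auto simp: algebra_simps)
  then have v1: "v = 1" and uD: "Cd = u - (r1 + r2 + r3)"
    by (auto simp: algebra_simps)
  define \<rho> where "\<rho> = (\<lambda>i::nat. if i = 0 then r1 else if i = 1 then r2 else if i = 2 then r3 else -u)"
  have prod4: "(\<Prod>i<4. [:- \<rho> i, 1:]) = [:-r1, 1:] * [:-r2, 1:] * [:-r3, 1:] * [:-(-u), 1:]"
    by (simp add: \<rho>_def numeral_eq_Suc lessThan_Suc ac_simps)
  have QQ': "Q = (\<Prod>i<4. [:- \<rho> i, 1:])"
    unfolding prod4 QQ using Q3e v1 unfolding u_def v_def by simp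
  have "poly Q pb = (pb - r1) * (pb - r2) * (pb - r3) * (pb + u)"
    unfolding QQ' prod4 by (simp add: algebra_simps)
  with s3 have "(pb - r1) * (pb - r2) * (pb - r3) * (pb + u) < 0" by simp
  moreover have "(pb - r1) * (pb - r2) * (pb - r3) > 0" using r1 r2 r3 pa pab by simp
  ultimately have "pb + u < 0"
    by (metis mult_nonneg_nonneg less_le_not_le not_le)
  then have "0 < -u" using pa pab by simp
  show ?thesis
    by (rule exI[of _ \<rho>]) (use QQ' r1 r2 r3 \<open>0 < -u\<close> uD v1 in \<open>auto simp: \<rho>_def\<close>)
qed
definition FT :: "real \<Rightarrow> real \<Rightarrow> nat \<Rightarrow> nat \<Rightarrow> real" where
  "FT s t p q = (if p = q then (if p = 0 then 1 - 2*t else 1 - 2*s) else 5 - 2*(s+t))"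

definition FE :: "real \<Rightarrow> real \<Rightarrow> nat \<Rightarrow> nat \<Rightarrow> real" where
  "FE s t p q = (if (p = 0 \<or> p = 2) = (q = 0 \<or> q = 2) then (if p = 0 \<or> p = 2 then 1 - 2*t else 1 - 2*s) else 5 - 2*(s+t))
     + (if p \<le> 1 \<and> q \<le> 1 then 2 else 0)"

definition wT :: "real \<Rightarrow> real \<Rightarrow> nat \<Rightarrow> real" where
  "wT s t p = (if p = 0 then s else t)"

definition wE :: "real \<Rightarrow> real \<Rightarrow> nat \<Rightarrow> real" where
  "wE s t p = (if p = 0 then 2 else if p = 1 then 1 else if p = 2 then s - 2 else t - 1)"

lemma neg_char_matrix: "A \<in> carrier_mat n n \<Longrightarrow> - char_matrix A x = mat n n (\<lambda>(i,j). (if i = j then x else 0) - A $$ (i,j))"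
  unfolding char_matrix_def by (rule eq_matI) auto

lemma cp4: "char_poly (Fmat 4 (\<lambda>p. p) (FE s t) (wE s t)) = [:cD0 s t, cD1 s t, cD2 s t, cD3 s t, 1:]"
proof -
  have "poly (char_poly (Fmat 4 (\<lambda>p. p) (FE s t) (wE s t))) x = poly [:cD0 s t, cD1 s t, cD2 s t, cD3 s t, 1:] x" for x
  proof -
    have "poly (char_poly (Fmat 4 (\<lambda>p. p) (FE s t) (wE s t))) x = det (- char_matrix (Fmat 4 (\<lambda>p. p) (FE s t) (wE s t)) x)"
      by (rule char_poly_matrix[OF Fmat_carrier])
    also have "\<dots> = det (mat 4 4 (\<lambda>(i,j). (if i = j then x else 0) - (Fmat 4 (\<lambda>p. p) (FE s t) (wE s t)) $$ (i,j)))"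
      by (subst neg_char_matrix[of _ 4]) auto
    also have "\<dots> = poly [:cD0 s t, cD1 s t, cD2 s t, cD3 s t, 1:] x"
      unfolding det4 d3_def
      by (simp add: Fmat_def FE_def wE_def cdefs algebra_simps power2_eq_square power3_eq_cube power4_eq_xxxx eval_nat_numeral)
    finally show ?thesis .
  qed
  then show ?thesis by (intro poly_eq_poly_eq_iff[THEN iffD1] ext) 
qed
lemma cp2: "char_poly (Fmat 2 (\<lambda>p. p) (FT s t) (wT s t)) = [:cC0 s t, cC1 s t, 1:]"
proof -
  have "poly (char_poly (Fmat 2 (\<lambda>p. p) (FT s t) (wT s t))) x = poly [:cC0 s t, cC1 s t, 1:] x" for x
  proof -
    have "poly (char_poly (Fmat 2 (\<lambda>p. p) (FT s t) (wT s t))) x = det (- char_matrix (Fmat 2 (\<lambda>p. p) (FT s t) (wT s t)) x)"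
      by (rule char_poly_matrix[OF Fmat_carrier])
    also have "\<dots> = det (mat 2 2 (\<lambda>(i,j). (if i = j then x else 0) - (Fmat 2 (\<lambda>p. p) (FT s t) (wT s t)) $$ (i,j)))"
      by (subst neg_char_matrix[of _ 2]) auto
    also have "\<dots> = poly [:cC0 s t, cC1 s t, 1:] x"
      unfolding det2
      by (simp add: Fmat_def FT_def wT_def cdefs algebra_simps power2_eq_square power3_eq_cube power4_eq_xxxx eval_nat_numeral)
    finally show ?thesis .
  qed
  then show ?thesis by (intro poly_eq_poly_eq_iff[THEN iffD1] ext)
qed

lemma quad_roots:
  fixes C0 C1 :: real
  assumes C0: "C0 < 0"
  shows "\<exists>\<nu> \<mu>. [:C0, C1, 1:] = [:-\<nu>, 1:] * [:-\<mu>, 1:] \<and> \<nu> < 0 \<and> 0 < \<mu> \<and> \<nu> + \<mu> = - C1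
     \<and> \<nu>^2 + C1 * \<nu> + C0 = 0"
proof -
  define D where "D = C1^2 - 4 * C0"
  have D: "D > C1^2" using C0 unfolding D_def by simp
  have sD: "sqrt D > \<bar>C1\<bar>"
    using real_sqrt_less_mono[OF D] by simp
  have "0 \<le> D" using D zero_le_power2[of C1] by linarith
  then have sq: "sqrt D ^ 2 = D" by simp
  define \<nu> where "\<nu> = (- C1 - sqrt D) / 2"
  define \<mu> where "\<mu> = (- C1 + sqrt D) / 2"
  have "\<nu> * \<mu> = (C1^2 - sqrt D ^ 2) / 4" unfolding \<nu>_def \<mu>_def by (simp add: field_simps power2_eq_square)
  also have "\<dots> = C0" unfolding sq by (simp add: D_def)
  finally have prod: "\<nu> * \<mu> = C0" .
  have sum: "\<nu> + \<mu> = - C1" unfolding \<nu>_def \<mu>_def by (simp add: field_simps)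
  have "[:-\<nu>, 1:] * [:-\<mu>, 1:] = [:\<nu> * \<mu>, -(\<nu> + \<mu>), 1:]" by (simp add: algebra_simps)
  also have "\<dots> = [:C0, C1, 1:]" using prod sum by simp
  finally have f: "[:C0, C1, 1:] = [:-\<nu>, 1:] * [:-\<mu>, 1:]" by simp
  have "\<nu> < 0" unfolding \<nu>_def using sD by (simp add: abs_if split: if_splits)
  moreover have "0 < \<mu>" unfolding \<mu>_def using sD by (simp add: abs_if split: if_splits)
  moreover have "\<nu>^2 + C1 * \<nu> + C0 = 0"
  proof -
    have "\<nu>^2 + C1 * \<nu> + C0 = \<nu> * (\<nu> + C1) + C0" by (simp add: algebra_simps power2_eq_square)
    also have "\<nu> + C1 = - \<mu>" using sum by simp
    finally show ?thesis using prod by simp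
  qed
  ultimately show ?thesis using f sum by blast
qed
lemma poly_Q4: "poly [:cD0 s t, cD1 s t, cD2 s t, cD3 s t, 1:] x = Q4val s t x"
  unfolding Q4val_def by (simp add: algebra_simps power2_eq_square power3_eq_cube power4_eq_xxxx)

lemma signs:
  fixes s t :: real
  assumes "3 \<le> s" "3 \<le> t" "s = t \<or> s = t + 1 \<or> t = s + 1"
  shows "cC0 s t < 0 \<and> cal s t < 0 \<and> cbe s t > 0 \<and> cD0 s t < 0 \<and>
    (\<exists>p1 p2. 0 < p1 \<and> p1 < p2 \<and> Q4val s t p1 > 0 \<and> Q4val s t p2 < 0)"
proof -
  consider "s = t" | "s = t + 1" | "t = s + 1" using assms(3) by blast
  then show ?thesis
  proof cases
    case 1
    define k where "k = s - 3"
    have k: "k \<ge> 0" and st: "s = k + 3" "t = k + 3" using assms 1 unfolding k_def by auto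
    show ?thesis unfolding st
      using pos_D0neg_e[OF k] pos_al_e[OF k] pos_be_e[OF k] pos_C0_e[OF k] pos_p1_e[OF k] pos_p2_e[OF k] k
      by (intro conjI exI[of _ "2*k+5"] exI[of _ "4*k+9"]) auto
  next
    case 2
    define k where "k = t - 3"
    have k: "k \<ge> 0" and st: "s = k + 4" "t = k + 3" using assms 2 unfolding k_def by auto
    show ?thesis unfolding st
      using pos_D0neg_a[OF k] pos_al_a[OF k] pos_be_a[OF k] pos_C0_a[OF k] pos_p1_a[OF k] pos_p2_a[OF k] k
      by (intro conjI exI[of _ "2*k+5"] exI[of _ "4*k+11"]) auto
  next
    case 3
    define k where "k = s - 3"
    have k: "k \<ge> 0" and st: "s = k + 3" "t = k + 4" using assms 3 unfolding k_def by auto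
    show ?thesis unfolding st
      using pos_D0neg_b[OF k] pos_al_b[OF k] pos_be_b[OF k] pos_C0_b[OF k] pos_p1_b[OF k] pos_p2_b[OF k] k
      by (intro conjI exI[of _ "2*k+5"] exI[of _ "4*k+11"]) auto
  qed
qed

lemma numeric_main:
  fixes s t :: real
  assumes "3 \<le> s" "3 \<le> t" "s = t \<or> s = t + 1 \<or> t = s + 1"
  shows "\<exists>\<nu> \<mu> \<rho>. [:cC0 s t, cC1 s t, 1:] = [:-\<nu>, 1:] * [:-\<mu>, 1:] \<and> \<nu> < 0 \<and> 0 < \<mu> \<and> \<nu> + \<mu> = - cC1 s t \<and>
    [:cD0 s t, cD1 s t, cD2 s t, cD3 s t, 1:] = (\<Prod>i<(4::nat). [:- \<rho> i, 1:]) \<and> \<nu> < \<rho> 0 \<and> \<rho> 0 < 0 \<and>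
    0 < \<rho> 1 \<and> 0 < \<rho> 2 \<and> 0 < \<rho> 3 \<and> \<rho> 0 + \<rho> 1 + \<rho> 2 + \<rho> 3 = - cD3 s t"
proof -
  from signs[OF assms] obtain p1 p2 where sg: "cC0 s t < 0" "cal s t < 0" "cbe s t > 0" "cD0 s t < 0"
    "0 < p1" "p1 < p2" "Q4val s t p1 > 0" "Q4val s t p2 < 0" by blast
  obtain \<nu> \<mu> where q: "[:cC0 s t, cC1 s t, 1:] = [:-\<nu>, 1:] * [:-\<mu>, 1:]" "\<nu> < 0" "0 < \<mu>" "\<nu> + \<mu> = - cC1 s t"
    "\<nu>^2 + cC1 s t * \<nu> + cC0 s t = 0"
    using quad_roots[OF sg(1)] by blast
  have "Q4val s t \<nu> = cal s t * \<nu> + cbe s t" using q(5) unfolding Q4_div by simp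
  also have "\<dots> > 0" using sg(2,3) q(2) by (simp add: add_pos_pos mult_neg_neg)
  finally have a0: "Q4val s t \<nu> > 0" .
  obtain \<rho> :: "nat \<Rightarrow> real" where r: "[:cD0 s t, cD1 s t, cD2 s t, cD3 s t, 1:] = (\<Prod>i<(4::nat). [:- \<rho> i, 1:])"
    "\<nu> < \<rho> 0" "\<rho> 0 < 0" "0 < \<rho> 1" "0 < \<rho> 2" "0 < \<rho> 3" "\<rho> 0 + \<rho> 1 + \<rho> 2 + \<rho> 3 = - cD3 s t"
  proof -
    have P: "poly [:cD0 s t, cD1 s t, cD2 s t, cD3 s t, 1:] \<nu> > 0" "poly [:cD0 s t, cD1 s t, cD2 s t, cD3 s t, 1:] 0 < 0"
      "poly [:cD0 s t, cD1 s t, cD2 s t, cD3 s t, 1:] p1 > 0" "poly [:cD0 s t, cD1 s t, cD2 s t, cD3 s t, 1:] p2 < 0"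
      unfolding poly_Q4 using a0 sg by (auto simp: Q4val_def)
    show ?thesis using quartic_roots[OF q(2) sg(5) sg(6) refl P] that by blast
  qed
  show ?thesis using q r by blast
qed
lemma perm_list:
  assumes "distinct R" "set R \<subseteq> {0..<n}"
  defines "L \<equiv> R @ filter (\<lambda>i. i \<notin> set R) [0..<n]"
  shows "distinct L" "set L = {0..<n}" "length L = n" "\<And>p. p < length R \<Longrightarrow> L ! p = R ! p"
    "length R \<le> n"
proof -
  show dL: "distinct L" unfolding L_def using assms(1) by auto
  show sL: "set L = {0..<n}" unfolding L_def using assms(2) by auto
  show "length L = n" using distinct_card[OF dL] sL by simp
  show "\<And>p. p < length R \<Longrightarrow> L ! p = R ! p" unfolding L_def by (simp add: nth_append)
  show "length R \<le> n" using distinct_card[OF assms(1)] card_mono[OF _ assms(2)] by simp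
qed

lemma sum_perm_list:
  assumes "distinct L" "set L = {0..<n}" "length L = n"
  shows "(\<Sum>r<n. g (L ! r)) = (\<Sum>i<n. g i)"
proof -
  have "bij_betw ((!) L) {..<n} (set L)" by (rule bij_betw_nth) (use assms in auto)
  then have "bij_betw ((!) L) {..<n} {..<n}" using assms(2) by (simp add: atLeast0LessThan)
  then show ?thesis by (rule sum.reindex_bij_betw)
qed

lemma char_poly_cells:
  fixes S :: "real mat" and cell :: "nat \<Rightarrow> nat" and F and R :: "nat list"
  assumes S: "S \<in> carrier_mat n n"
    and Sent: "\<And>i j. i < n \<Longrightarrow> j < n \<Longrightarrow> S $$ (i,j) = (if i = j then 0 else F (cell i) (cell j))"
    and cellk: "\<And>i. i < n \<Longrightarrow> cell i < length R"
    and R: "distinct R" "set R \<subseteq> {0..<n}" "\<And>p. p < length R \<Longrightarrow> cell (R!p) = p"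
  defines "L \<equiv> R @ filter (\<lambda>i. i \<notin> set R) [0..<n]"
  shows "char_poly S = (\<Prod>r\<in>{length R..<n}. [:F (cell (L!r)) (cell (L!r)), 1:]) *
     char_poly (Fmat (length R) (\<lambda>p. p) F (\<lambda>p. real (card {i. i < n \<and> cell i = p})))"
proof -
  let ?k = "length R"
  note PL = perm_list[OF R(1,2), folded L_def]
  define \<pi> where "\<pi> = (\<lambda>r. if r < n then L ! r else r)"
  have Ln: "r < n \<Longrightarrow> L ! r < n" for r using PL(2,3) nth_mem[of r L] by auto
  have "bij_betw ((!) L) {..<n} (set L)" by (rule bij_betw_nth) (use PL in auto)
  then have "bij_betw \<pi> {0..<n} {0..<n}" unfolding \<pi>_def using PL(2)
    by (auto simp: atLeast0LessThan intro: bij_betw_cong[THEN iffD1])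
  then have perm: "\<pi> permutes {0..<n}" by (rule bij_imp_permutes) (auto simp: \<pi>_def)
  define c where "c = (\<lambda>r. cell (L ! r))"
  have Lij: "i < n \<Longrightarrow> j < n \<Longrightarrow> L ! i = L ! j \<longleftrightarrow> i = j" for i j
    using PL(1,3) nth_eq_iff_index_eq by blast
  have eqF: "mat n n (\<lambda>(i,j). S $$ (\<pi> i, \<pi> j)) = Fmat n c F (\<lambda>_. 1)"
    by (rule eq_matI) (auto simp: Fmat_def \<pi>_def c_def Sent Ln Lij)
  have "char_poly S = char_poly (Fmat n c F (\<lambda>_. 1))"
    using char_poly_perm[OF S perm] eqF by simp
  also have "\<dots> = (\<Prod>r\<in>{?k..<n}. [:F (c r) (c r), 1:]) *
     char_poly (Fmat ?k c F (\<lambda>p. 1 + (\<Sum>r\<in>{?k..<n}. if c r = p then 1 else 0)))"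
    by (rule deflate_all) (use PL cellk Ln R(3) in \<open>auto simp: c_def\<close>)
  also have "Fmat ?k c F (\<lambda>p. 1 + (\<Sum>r\<in>{?k..<n}. if c r = p then 1 else 0)) =
      Fmat ?k (\<lambda>p. p) F (\<lambda>p. real (card {i. i < n \<and> cell i = p}))"
  proof (rule Fmat_cong2)
    fix p assume p: "p < ?k"
    have "(\<Sum>r<n. if c r = p then 1 else 0 :: real) = (\<Sum>r\<in>{..<?k}. if c r = p then 1 else 0) + (\<Sum>r\<in>{?k..<n}. if c r = p then 1 else 0)"
      using PL(5) by (metis (no_types, lifting) atLeast0LessThan sum.atLeastLessThan_concat zero_le)
    also have "(\<Sum>r\<in>{..<?k}. if c r = p then 1 else 0 :: real) = (\<Sum>r\<in>{..<?k}. if r = p then 1 else 0)"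
      by (rule sum.cong) (auto simp: c_def PL(4) R(3))
    also have "\<dots> = 1" using p by simp
    finally have e1: "1 + (\<Sum>r\<in>{?k..<n}. if c r = p then 1 else 0) = (\<Sum>r<n. if c r = p then 1 else 0 :: real)" by simp
    have "(\<Sum>r<n. if c r = p then 1 else 0 :: real) = (\<Sum>i<n. if cell i = p then 1 else 0)"
      unfolding c_def by (rule sum_perm_list[OF PL(1-3), of "\<lambda>x. if cell x = p then 1 else 0"])
    also have "\<dots> = real (card {i. i < n \<and> cell i = p})"
      by (simp add: sum.If_cases lessThan_def Collect_conj_eq Int_commute)
    finally show "1 + (\<Sum>r\<in>{?k..<n}. if c r = p then 1 else 0) = real (card {i. i < n \<and> cell i = p})"
      using e1 by simp
  next
    fix p assume p: "p < ?k"
    show "c p = p" using p by (simp add: c_def PL(4) R(3))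
  qed
  finally show ?thesis unfolding c_def .
qed
lemma sum_cells:
  fixes n k :: nat and cell :: "nat \<Rightarrow> nat" and g :: "nat \<Rightarrow> real"
  assumes "\<And>i. i < n \<Longrightarrow> cell i < k"
  shows "(\<Sum>i<n. g (cell i)) = (\<Sum>p<k. real (card {i. i < n \<and> cell i = p}) * g p)"
proof -
  have "(\<Sum>i<n. g (cell i)) = (\<Sum>p\<in>{..<k}. sum (\<lambda>i. g (cell i)) {x \<in> {..<n}. cell x = p})"
    by (rule sum.group[symmetric]) (use assms in auto)
  also have "\<dots> = (\<Sum>p<k. real (card {i. i < n \<and> cell i = p}) * g p)"
  proof (rule sum.cong[OF refl])
    fix p
    have "sum (\<lambda>i. g (cell i)) {x \<in> {..<n}. cell x = p} = sum (\<lambda>i. g p) {x \<in> {..<n}. cell x = p}"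
      by (rule sum.cong) auto
    also have "\<dots> = real (card {i. i < n \<and> cell i = p}) * g p" by simp
    finally show "sum (\<lambda>i. g (cell i)) {x \<in> {..<n}. cell x = p} = real (card {i. i < n \<and> cell i = p}) * g p" .
  qed
  finally show ?thesis .
qed

lemma energy_cells:
  fixes S :: "real mat" and cell :: "nat \<Rightarrow> nat" and F and R :: "nat list" and m :: nat
  assumes S: "S \<in> carrier_mat n n"
    and Sent: "\<And>i j. i < n \<Longrightarrow> j < n \<Longrightarrow> S $$ (i,j) = (if i = j then 0 else F (cell i) (cell j))"
    and cellk: "\<And>i. i < n \<Longrightarrow> cell i < length R"
    and R: "distinct R" "set R \<subseteq> {0..<n}" "\<And>p. p < length R \<Longrightarrow> cell (R!p) = p"
    and small: "char_poly (Fmat (length R) (\<lambda>p. p) F (\<lambda>p. real (card {i. i < n \<and> cell i = p}))) = (\<Prod>i<m. [:- \<rho> i, 1:])"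
  shows "sum_mset (image_mset cmod (proots (char_poly (map_mat complex_of_real S))))
     = (\<Sum>p<length R. (real (card {i. i < n \<and> cell i = p}) - 1) * \<bar>F p p\<bar>) + (\<Sum>i<m. \<bar>\<rho> i\<bar>)"
proof -
  define L where "L = R @ filter (\<lambda>i. i \<notin> set R) [0..<n]"
  let ?k = "length R"
  note PL = perm_list[OF R(1,2), folded L_def]
  have cp: "char_poly S = (\<Prod>r\<in>{?k..<n}. [:F (cell (L!r)) (cell (L!r)), 1:]) * (\<Prod>i<m. [:- \<rho> i, 1:])"
    using char_poly_cells[OF S Sent cellk R] small unfolding L_def by simp
  have E: "sum_mset (image_mset cmod (proots (char_poly (map_mat complex_of_real S))))
     = (\<Sum>r\<in>{?k..<n}. \<bar>F (cell (L!r)) (cell (L!r))\<bar>) + (\<Sum>i<m. \<bar>\<rho> i\<bar>)"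
    by (rule energy_lin[OF S _ cp]) simp
  let ?g = "\<lambda>i. \<bar>F (cell i) (cell i)\<bar>"
  have "(\<Sum>r<n. ?g (L!r)) = (\<Sum>r\<in>{..<?k}. ?g (L!r)) + (\<Sum>r\<in>{?k..<n}. ?g (L!r))"
    using PL(5) by (metis (no_types, lifting) atLeast0LessThan sum.atLeastLessThan_concat zero_le)
  moreover have "(\<Sum>r<n. ?g (L!r)) = (\<Sum>i<n. ?g i)" by (rule sum_perm_list[OF PL(1-3)])
  moreover have "(\<Sum>r\<in>{..<?k}. ?g (L!r)) = (\<Sum>p<?k. \<bar>F p p\<bar>)"
    by (rule sum.cong) (auto simp: PL(4) R(3))
  moreover have "(\<Sum>i<n. ?g i) = (\<Sum>p<?k. real (card {i. i < n \<and> cell i = p}) * \<bar>F p p\<bar>)"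
    by (rule sum_cells[OF cellk])
  ultimately have "(\<Sum>r\<in>{?k..<n}. ?g (L!r)) = (\<Sum>p<?k. (real (card {i. i < n \<and> cell i = p}) - 1) * \<bar>F p p\<bar>)"
    by (simp add: algebra_simps sum_subtractf)
  then show ?thesis using E by simp
qed

lemma card3_split:
  assumes "finite f" "card f = 3" "i \<in> f" "j \<in> f" "i \<noteq> j"
  shows "\<exists>x. f = {i, j, x} \<and> x \<noteq> i \<and> x \<noteq> j"
proof -
  have "card (f - {i, j}) = 1" using assms by (simp add: card_Diff_subset)
  then obtain x where x: "f - {i, j} = {x}" by (auto simp: card_Suc_eq)
  then have "f = {i, j, x}" using assms by auto
  moreover have "x \<noteq> i" "x \<noteq> j" using x by auto
  ultimately show ?thesis by blast
qed

lemma codeg_T: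
  fixes n i j :: nat
  defines "a \<equiv> (n + 1) div 2"
  assumes i: "i < n" and j: "j < n" and ij: "i \<noteq> j"
  shows "codegree (turan_edges n) i j = (if (i < a) = (j < a) then (if i < a then n - a else a) else n - 2)"
proof -
  define T where "T = {x. x < n \<and> x \<noteq> i \<and> x \<noteq> j \<and> ((i < a) = (j < a) \<longrightarrow> (x < a) \<noteq> (i < a))}"
  have p1: "turan_part1 n = {0..<a}" and p2: "turan_part2 n = {a..<n}"
    unfolding turan_part1_def turan_part2_def a_def by auto
  have eq: "{f \<in> turan_edges n. i \<in> f \<and> j \<in> f} = (\<lambda>x. {i, j, x}) ` T"
  proof (intro equalityI subsetI)
    fix f assume f: "f \<in> {f \<in> turan_edges n. i \<in> f \<and> j \<in> f}"
    then have f1: "f \<subseteq> {0..<n}" "card f = 3" "f \<inter> {0..<a} \<noteq> {}" "f \<inter> {a..<n} \<noteq> {}" "i \<in> f" "j \<in> f"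
      unfolding turan_edges_def p1 p2 by auto
    have "finite f" using f1(1) finite_subset by blast
    from card3_split[OF this f1(2) f1(5) f1(6) ij] obtain x where x: "f = {i, j, x}" "x \<noteq> i" "x \<noteq> j" by blast
    have "x < n" using f1(1) x(1) by auto
    moreover have "(i < a) = (j < a) \<longrightarrow> (x < a) \<noteq> (i < a)"
      using f1(3,4) x(1) by auto
    ultimately show "f \<in> (\<lambda>x. {i, j, x}) ` T" unfolding T_def using x by blast
  next
    fix f assume "f \<in> (\<lambda>x. {i, j, x}) ` T"
    then obtain x where x: "f = {i, j, x}" "x < n" "x \<noteq> i" "x \<noteq> j" "(i < a) = (j < a) \<longrightarrow> (x < a) \<noteq> (i < a)"
      unfolding T_def by blast
    have "card f = 3" using x ij by auto
    moreover have "f \<subseteq> {0..<n}" using x i j by auto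
    moreover have "f \<inter> {0..<a} \<noteq> {}" "f \<inter> {a..<n} \<noteq> {}" using x i j by auto
    ultimately show "f \<in> {f \<in> turan_edges n. i \<in> f \<and> j \<in> f}"
      unfolding turan_edges_def p1 p2 using x by auto
  qed
  have inj: "inj_on (\<lambda>x. {i, j, x}) T"
    unfolding T_def by (rule inj_onI) (auto simp: insert_eq_iff doubleton_eq_iff)
  have "codegree (turan_edges n) i j = card T"
    unfolding codegree_def eq by (rule card_image[OF inj])
  also have "card T = (if (i < a) = (j < a) then (if i < a then n - a else a) else n - 2)"
  proof -
    have an: "a \<le> n" unfolding a_def by simp
    consider "i < a" "j < a" | "\<not> i < a" "\<not> j < a" | "(i < a) \<noteq> (j < a)" by blast
    then show ?thesis
    proof cases
      case 1
      then have "T = {a..<n}" unfolding T_def by auto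
      then show ?thesis using 1 by simp
    next
      case 2
      then have "T = {0..<a}" unfolding T_def using an by auto
      then show ?thesis using 2 by simp
    next
      case 3
      then have "T = {0..<n} - {i, j}" unfolding T_def by auto
      then show ?thesis using 3 i j ij by (simp add: card_Diff_subset)
    qed
  qed
  finally show ?thesis .
qed

lemma finite_turan: "finite (turan_edges n)"
proof -
  have "turan_edges n \<subseteq> Pow {0..<n}" unfolding turan_edges_def by auto
  then show ?thesis by (rule finite_subset) simp
qed

lemma codeg_minus:
  assumes "finite E" "e \<in> E"
  shows "real (codegree (E - {e}) i j) = real (codegree E i j) - (if i \<in> e \<and> j \<in> e then 1 else 0)"
proof -
  define A where "A = {f \<in> E. i \<in> f \<and> j \<in> f}"
  have eq: "{f \<in> E - {e}. i \<in> f \<and> j \<in> f} = A - {e}" unfolding A_def by auto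
  have fin: "finite A" unfolding A_def using assms by simp
  show ?thesis
  proof (cases "i \<in> e \<and> j \<in> e")
    case True
    then have eA: "e \<in> A" unfolding A_def using assms by simp
    then have "card A \<ge> 1" using fin by (metis One_nat_def Suc_leI card_gt_0_iff empty_iff)
    moreover have "card (A - {e}) = card A - 1" by (rule card_Diff_singleton[OF eA])
    ultimately show ?thesis unfolding codegree_def eq A_def[symmetric] using True by (simp add: of_nat_diff)
  next
    case False
    then have "e \<notin> A" unfolding A_def by auto
    then have "A - {e} = A" by simp
    then show ?thesis unfolding codegree_def eq A_def[symmetric] using False by simp
  qed
qed
lemma seidel_entry: "i < n \<Longrightarrow> j < n \<Longrightarrow> seidel_matrix n E $$ (i,j) = (if i = j then 0 else 1 - 2 * real (codegree E i j))"
  unfolding seidel_matrix_def by simp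

lemma seidel_carrier: "seidel_matrix n E \<in> carrier_mat n n"
  unfolding seidel_matrix_def by simp

lemma energy_T:
  fixes n :: nat and \<rho> :: "nat \<Rightarrow> real"
  defines "a \<equiv> (n + 1) div 2"
  assumes n: "n \<ge> 6"
    and rho: "[:cC0 (real a) (real (n - a)), cC1 (real a) (real (n - a)), 1:] = (\<Prod>i<2. [:- \<rho> i, 1:])"
  shows "seidel_energy n (turan_edges n) = (real a - 1) * (2 * real (n - a) - 1) + (real (n - a) - 1) * (2 * real a - 1)
     + \<bar>\<rho> 0\<bar> + \<bar>\<rho> 1\<bar>"
proof -
  define cell where "cell = (\<lambda>i::nat. if i < a then 0 else 1 :: nat)"
  define F where "F = FT (real a) (real (n - a))"
  have a3: "3 \<le> a" "a + 3 \<le> n" using n unfolding a_def by auto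
  have Sent: "seidel_matrix n (turan_edges n) $$ (i,j) = (if i = j then 0 else F (cell i) (cell j))"
    if "i < n" "j < n" for i j
  proof -
    have ct: "i \<noteq> j \<Longrightarrow> codegree (turan_edges n) i j = (if (i < a) = (j < a) then (if i < a then n - a else a) else n - 2)"
      using codeg_T[of i n j] that unfolding a_def by simp
    show ?thesis
    proof (cases "i = j")
      case True then show ?thesis using that by (simp add: seidel_entry)
    next
      case False
      have an: "a \<le> n" using a3 by simp
      show ?thesis using that a3 ct[OF False] False an
        by (cases "i < a"; cases "j < a") (simp_all add: seidel_entry F_def FT_def cell_def of_nat_diff algebra_simps)
    qed
  qed
  have cards: "real (card {i. i < n \<and> cell i = p}) = wT (real a) (real (n - a)) p" if "p < 2" for p
  proof -
    have "p = 0 \<or> p = 1" using that by auto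
    then show ?thesis
    proof
      assume p: "p = 0"
      have "{i. i < n \<and> cell i = p} = {0..<a}" using p a3 by (auto simp: cell_def)
      then show ?thesis using p by (simp add: wT_def)
    next
      assume p: "p = 1"
      have "{i. i < n \<and> cell i = p} = {a..<n}" using p a3 by (auto simp: cell_def)
      then show ?thesis using p by (simp add: wT_def)
    qed
  qed
  have length2: "length [0, a] = 2" by simp
  have small: "char_poly (Fmat (length [0, a]) (\<lambda>p. p) F (\<lambda>p. real (card {i. i < n \<and> cell i = p}))) = (\<Prod>i<2. [:- \<rho> i, 1:])"
  proof -
    have "Fmat (length [0, a]) (\<lambda>p. p) F (\<lambda>p. real (card {i. i < n \<and> cell i = p})) = Fmat 2 (\<lambda>p. p) F (wT (real a) (real (n - a)))"
      unfolding length2 by (rule Fmat_cong) (simp add: cards)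
    then have "char_poly (Fmat (length [0, a]) (\<lambda>p. p) F (\<lambda>p. real (card {i. i < n \<and> cell i = p})))
      = char_poly (Fmat 2 (\<lambda>p. p) F (wT (real a) (real (n - a))))" by (rule arg_cong)
    also have "\<dots> = (\<Prod>i<2. [:- \<rho> i, 1:])" unfolding F_def cp2 rho ..
    finally show ?thesis .
  qed
  have "seidel_energy n (turan_edges n) = (\<Sum>p<length [0, a]. (real (card {i. i < n \<and> cell i = p}) - 1) * \<bar>F p p\<bar>) + (\<Sum>i<2. \<bar>\<rho> i\<bar>)"
    unfolding seidel_energy_def
    by (rule energy_cells[OF seidel_carrier Sent _ _ _ _ small]) (use a3 in \<open>auto simp: cell_def less_Suc_eq\<close>)
  also have "\<dots> = (real a - 1) * (2 * real (n - a) - 1) + (real (n - a) - 1) * (2 * real a - 1) + \<bar>\<rho> 0\<bar> + \<bar>\<rho> 1\<bar>"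
  proof -
    have b3: "3 \<le> real (n - a)" using a3 by linarith
    have a3': "3 \<le> real a" using a3 by linarith
    have "(\<Sum>p<length [0, a]. (real (card {i. i < n \<and> cell i = p}) - 1) * \<bar>F p p\<bar>)
       = (real (card {i. i < n \<and> cell i = 0}) - 1) * \<bar>F 0 0\<bar> + (real (card {i. i < n \<and> cell i = 1}) - 1) * \<bar>F 1 1\<bar>"
      by (simp add: lessThan_Suc)
    also have "\<dots> = (real a - 1) * (2 * real (n - a) - 1) + (real (n - a) - 1) * (2 * real a - 1)"
      using cards[of 0] cards[of 1] a3' b3 by (simp add: F_def FT_def wT_def)
    finally show ?thesis by (simp add: lessThan_Suc numeral_2_eq_2)
  qed
  finally show ?thesis .
qed
lemma edge_shape:
  fixes n :: nat
  defines "a \<equiv> (n + 1) div 2"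
  assumes e: "e \<in> turan_edges n"
  shows "\<exists>x y z. e = {x, y, z} \<and> x \<noteq> y \<and> x \<noteq> z \<and> y \<noteq> z \<and> x < n \<and> y < n \<and> z < n \<and>
     (x < a) = (y < a) \<and> (z < a) \<noteq> (x < a)"
proof -
  have p1: "turan_part1 n = {0..<a}" and p2: "turan_part2 n = {a..<n}"
    unfolding turan_part1_def turan_part2_def a_def by auto
  have e1: "e \<subseteq> {0..<n}" "card e = 3" "e \<inter> {0..<a} \<noteq> {}" "e \<inter> {a..<n} \<noteq> {}"
    using e unfolding turan_edges_def p1 p2 by auto
  obtain p q r where pqr: "e = {p, q, r}" "p \<noteq> q" "p \<noteq> r" "q \<noteq> r"
    using e1(2) card_3_iff[of e] by blast
  have lt: "p < n" "q < n" "r < n" using e1(1) unfolding pqr(1) by auto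
  obtain w1 where w1: "w1 \<in> e" "w1 < a" using e1(3) by auto
  obtain w2 where w2: "w2 \<in> e" "\<not> w2 < a" using e1(4) by (auto simp: not_less)
  have mix: "\<not> ((p < a) = (q < a) \<and> (q < a) = (r < a))"
  proof
    assume h: "(p < a) = (q < a) \<and> (q < a) = (r < a)"
    have "w1 = p \<or> w1 = q \<or> w1 = r" "w2 = p \<or> w2 = q \<or> w2 = r" using w1(1) w2(1) unfolding pqr(1) by auto
    then show False using h w1(2) w2(2) by auto
  qed
  have c1: "(p < a) = (q < a) \<Longrightarrow> (r < a) \<noteq> (p < a)" using mix by blast
  have c2: "(p < a) \<noteq> (q < a) \<Longrightarrow> (p < a) = (r < a) \<Longrightarrow> (q < a) \<noteq> (p < a)" by blast
  have c3: "(p < a) \<noteq> (q < a) \<Longrightarrow> (p < a) \<noteq> (r < a) \<Longrightarrow> (q < a) = (r < a) \<and> (p < a) \<noteq> (q < a)" by blast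
  have e2: "e = {p, r, q}" "e = {q, r, p}" using pqr(1) by auto
  show ?thesis
  proof (cases "(p < a) = (q < a)")
    case True
    show ?thesis using pqr lt c1[OF True] True by blast
  next
    case False
    show ?thesis
    proof (cases "(p < a) = (r < a)")
      case True
      show ?thesis using pqr(2-4) lt e2(1) c2[OF False True] True by blast
    next
      case False2: False
      show ?thesis using pqr(2-4) lt e2(2) c3[OF False False2] by blast
    qed
  qed
qed
lemma energy_Te:
  fixes n :: nat and \<rho> :: "nat \<Rightarrow> real" and x y z :: nat
  defines "a \<equiv> (n + 1) div 2"
  defines "sN \<equiv> (if x < a then a else n - a)"
  assumes n: "n \<ge> 6" and e: "e \<in> turan_edges n"
    and exyz: "e = {x, y, z}" "x \<noteq> y" "x \<noteq> z" "y \<noteq> z" "x < n" "y < n" "z < n"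
       "(x < a) = (y < a)" "(z < a) \<noteq> (x < a)"
    and rho: "[:cD0 (real sN) (real (n - sN)), cD1 (real sN) (real (n - sN)), cD2 (real sN) (real (n - sN)),
               cD3 (real sN) (real (n - sN)), 1:] = (\<Prod>i<4. [:- \<rho> i, 1:])"
  shows "seidel_energy n (turan_edges n - {e}) = (2 * real (n - sN) - 3) + (real sN - 3) * (2 * real (n - sN) - 1)
     + (real (n - sN) - 2) * (2 * real sN - 1) + (\<Sum>i<4. \<bar>\<rho> i\<bar>)"
proof -
  define tN where "tN = n - sN"
  have a3: "3 \<le> a" "a + 3 \<le> n" using n unfolding a_def by auto
  have st: "3 \<le> sN" "3 \<le> tN" "sN + tN = n" using a3 unfolding tN_def sN_def by auto
  define Vx where "Vx = {i. i < n \<and> (i < a) = (x < a)}"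
  define Vz where "Vz = {i. i < n \<and> (i < a) \<noteq> (x < a)}"
  have cVx: "card Vx = sN"
  proof (cases "x < a")
    case True
    then have "Vx = {0..<a}" unfolding Vx_def using a3 by auto
    then show ?thesis using True unfolding sN_def by simp
  next
    case False
    then have "Vx = {a..<n}" unfolding Vx_def using a3 by auto
    then show ?thesis using False unfolding sN_def by simp
  qed
  have cVz: "card Vz = tN"
  proof (cases "x < a")
    case True
    then have "Vz = {a..<n}" unfolding Vz_def using a3 by auto
    then show ?thesis using True unfolding tN_def sN_def by simp
  next
    case False
    then have "Vz = {0..<a}" unfolding Vz_def using a3 by auto
    then show ?thesis using False a3 unfolding tN_def sN_def by simp
  qed
  have finV: "finite Vx" "finite Vz" unfolding Vx_def Vz_def by auto
  have xyVx: "x \<in> Vx" "y \<in> Vx" "z \<in> Vz" using exyz unfolding Vx_def Vz_def by auto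
  have c1: "card (Vx - {x, y}) = sN - 2" using cVx xyVx finV exyz(2) by (simp add: card_Diff_subset)
  have c2: "card (Vz - {z}) = tN - 1" using cVz xyVx finV by (simp add: card_Diff_subset)
  have "card (Vx - {x, y}) > 0" using c1 st by simp
  then obtain u where u: "u \<in> Vx - {x, y}" unfolding card_gt_0_iff by blast
  have "card (Vz - {z}) > 0" using c2 st by simp
  then obtain v where v: "v \<in> Vz - {z}" unfolding card_gt_0_iff by blast
  define cell where "cell = (\<lambda>i::nat. if i = x \<or> i = y then 0 else if i = z then 1 else if (i < a) = (x < a) then 2 else (3::nat))"
  define F where "F = FE (real sN) (real tN)"
  have he: "(cell i \<le> 1) = (i \<in> e)" for i unfolding cell_def exyz(1) by auto
  have hX: "(cell i = 0 \<or> cell i = 2) = ((i < a) = (x < a))" for i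
    unfolding cell_def using exyz(8,9) by auto
  have Fval: "F (cell i) (cell j) = (if ((i < a) = (x < a)) = ((j < a) = (x < a)) then
      (if (i < a) = (x < a) then 1 - 2 * real tN else 1 - 2 * real sN) else 5 - 2 * (real sN + real tN))
      + (if i \<in> e \<and> j \<in> e then 2 else 0)" for i j
    unfolding F_def FE_def hX he[symmetric] by simp
  have Sent: "seidel_matrix n (turan_edges n - {e}) $$ (i,j) = (if i = j then 0 else F (cell i) (cell j))"
    if "i < n" "j < n" for i j
  proof (cases "i = j")
    case True then show ?thesis using that by (simp add: seidel_entry)
  next
    case False
    have ct: "codegree (turan_edges n) i j = (if (i < a) = (j < a) then (if i < a then n - a else a) else n - 2)"
      using codeg_T[of i n j] that False unfolding a_def by simp
    have cm: "real (codegree (turan_edges n - {e}) i j) = real (codegree (turan_edges n) i j) - (if i \<in> e \<and> j \<in> e then 1 else 0)"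
      by (rule codeg_minus[OF finite_turan e])
    have an: "a \<le> n" using a3 by simp
    have sr: "real sN + real tN = real n" using st(3) by (metis of_nat_add)
    show ?thesis using that False an sr
      unfolding seidel_entry[OF that] cm ct Fval
      by (cases "x < a"; cases "i < a"; cases "j < a") (simp_all add: sN_def tN_def of_nat_diff algebra_simps)
  qed
  have uv: "u < n" "(u < a) = (x < a)" "u \<noteq> x" "u \<noteq> y" "v < n" "(v < a) \<noteq> (x < a)" "v \<noteq> z"
    using u v unfolding Vx_def Vz_def by auto
  have cells: "cell x = 0" "cell z = 1" "cell u = 2" "cell v = 3"
    unfolding cell_def using exyz uv by auto
  have Rd: "distinct [x, z, u, v]" using exyz uv by auto
  have Rs: "set [x, z, u, v] \<subseteq> {0..<n}" using exyz uv by auto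
  have Rc: "cell ([x, z, u, v] ! p) = p" if "p < length [x, z, u, v]" for p
    using that cells by (auto simp: less_Suc_eq)
  have cellk: "cell i < length [x, z, u, v]" for i unfolding cell_def by auto
  have cards: "real (card {i. i < n \<and> cell i = p}) = wE (real sN) (real tN) p" if "p < 4" for p
  proof -
    have "p = 0 \<or> p = 1 \<or> p = 2 \<or> p = 3" using that by auto
    moreover have "{i. i < n \<and> cell i = 0} = {x, y}" unfolding cell_def using exyz by auto
    moreover have "{i. i < n \<and> cell i = 1} = {z}" unfolding cell_def using exyz by auto
    moreover have "{i. i < n \<and> cell i = 2} = Vx - {x, y}" unfolding cell_def Vx_def using exyz by auto
    moreover have "{i. i < n \<and> cell i = 3} = Vz - {z}" unfolding cell_def Vz_def using exyz by auto
    ultimately show ?thesis using c1 c2 st exyz(2) by (auto simp: wE_def of_nat_diff)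
  qed
  have length4: "length [x, z, u, v] = 4" by simp
  have small: "char_poly (Fmat (length [x, z, u, v]) (\<lambda>p. p) F (\<lambda>p. real (card {i. i < n \<and> cell i = p}))) = (\<Prod>i<4. [:- \<rho> i, 1:])"
  proof -
    have "Fmat (length [x, z, u, v]) (\<lambda>p. p) F (\<lambda>p. real (card {i. i < n \<and> cell i = p})) = Fmat 4 (\<lambda>p. p) F (wE (real sN) (real tN))"
      unfolding length4 by (rule Fmat_cong) (simp add: cards)
    then have "char_poly (Fmat (length [x, z, u, v]) (\<lambda>p. p) F (\<lambda>p. real (card {i. i < n \<and> cell i = p})))
      = char_poly (Fmat 4 (\<lambda>p. p) F (wE (real sN) (real tN)))" by (rule arg_cong)
    also have "\<dots> = (\<Prod>i<4. [:- \<rho> i, 1:])" unfolding F_def cp4 tN_def rho ..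
    finally show ?thesis .
  qed
  have "seidel_energy n (turan_edges n - {e}) = (\<Sum>p<length [x, z, u, v]. (real (card {i. i < n \<and> cell i = p}) - 1) * \<bar>F p p\<bar>) + (\<Sum>i<4. \<bar>\<rho> i\<bar>)"
    unfolding seidel_energy_def
    by (rule energy_cells[OF seidel_carrier Sent cellk Rd Rs Rc small])
  also have "(\<Sum>p<length [x, z, u, v]. (real (card {i. i < n \<and> cell i = p}) - 1) * \<bar>F p p\<bar>)
     = (2 * real (n - sN) - 3) + (real sN - 3) * (2 * real (n - sN) - 1) + (real (n - sN) - 2) * (2 * real sN - 1)"
  proof -
    have s3: "3 \<le> real sN" "3 \<le> real tN" using st by linarith+
    have "(\<Sum>p<length [x, z, u, v]. (real (card {i. i < n \<and> cell i = p}) - 1) * \<bar>F p p\<bar>)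
       = (\<Sum>p<4. (wE (real sN) (real tN) p - 1) * \<bar>F p p\<bar>)"
      unfolding length4 by (rule sum.cong) (auto simp: cards)
    also have "\<dots> = (2 * real tN - 3) + (real sN - 3) * (2 * real tN - 1) + (real tN - 2) * (2 * real sN - 1)"
      using s3 by (simp add: eval_nat_numeral lessThan_Suc wE_def F_def FE_def)
    finally show ?thesis unfolding tN_def .
  qed
  finally show ?thesis by simp
qed

lemma cC_sym: "cC0 s t = cC0 t s" "cC1 s t = cC1 t s"
  unfolding cC0_def cC1_def by (simp_all add: algebra_simps)

theorem corollary2p14:
  fixes n :: nat and e :: "nat set"
  assumes "n \<ge> 6" and "e \<in> turan_edges n"
  shows "seidel_energy n (turan_edges n) > seidel_energy n (turan_edges n - {e})"
proof -
  define a where "a = (n + 1) div 2"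
  obtain x y z where exyz: "e = {x, y, z}" "x \<noteq> y" "x \<noteq> z" "y \<noteq> z" "x < n" "y < n" "z < n"
       "(x < a) = (y < a)" "(z < a) \<noteq> (x < a)"
    using edge_shape[OF assms(2)] unfolding a_def by blast
  define sN where "sN = (if x < a then a else n - a)"
  have a3: "3 \<le> a" "a + 3 \<le> n" "a = n - a \<or> a = n - a + 1" using assms(1) unfolding a_def by auto
  have stc: "(sN = a \<and> n - sN = n - a) \<or> (sN = n - a \<and> n - sN = a)" unfolding sN_def using a3 by auto
  define s where "s = real sN"
  define t where "t = real (n - sN)"
  have sa: "(s = real a \<and> t = real (n - a)) \<or> (s = real (n - a) \<and> t = real a)"
    using stc unfolding s_def t_def by auto
  have s3: "3 \<le> s" "3 \<le> t" using sa a3 by auto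
  have srel: "s = t \<or> s = t + 1 \<or> t = s + 1" using sa a3(3) by (auto simp: of_nat_diff)
  obtain \<nu> \<mu> \<rho> where nm: "[:cC0 s t, cC1 s t, 1:] = [:-\<nu>, 1:] * [:-\<mu>, 1:]" "\<nu> < 0" "0 < \<mu>" "\<nu> + \<mu> = - cC1 s t"
    and r: "[:cD0 s t, cD1 s t, cD2 s t, cD3 s t, 1:] = (\<Prod>i<(4::nat). [:- \<rho> i, 1:])" "\<nu> < \<rho> 0" "\<rho> 0 < 0"
      "0 < \<rho> 1" "0 < \<rho> 2" "0 < \<rho> 3" "\<rho> 0 + \<rho> 1 + \<rho> 2 + \<rho> 3 = - cD3 s t"
    using numeric_main[OF s3 srel] by blast
  define \<rho>T where "\<rho>T = (\<lambda>i::nat. if i = 0 then \<nu> else \<mu>)"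
  have cCab: "cC0 (real a) (real (n - a)) = cC0 s t" "cC1 (real a) (real (n - a)) = cC1 s t"
    using sa cC_sym by auto
  have rT: "[:cC0 (real a) (real (n - a)), cC1 (real a) (real (n - a)), 1:] = (\<Prod>i<2. [:- \<rho>T i, 1:])"
    unfolding cCab nm(1) by (simp add: \<rho>T_def numeral_2_eq_2 lessThan_Suc)
  have ET: "seidel_energy n (turan_edges n) = (real a - 1) * (2 * real (n - a) - 1) + (real (n - a) - 1) * (2 * real a - 1)
     + \<bar>\<rho>T 0\<bar> + \<bar>\<rho>T 1\<bar>"
    by (rule energy_T[of n \<rho>T, folded a_def, OF assms(1) rT])
  have rho': "[:cD0 (real sN) (real (n - sN)), cD1 (real sN) (real (n - sN)), cD2 (real sN) (real (n - sN)),
               cD3 (real sN) (real (n - sN)), 1:] = (\<Prod>i<4. [:- \<rho> i, 1:])"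
    using r(1) unfolding s_def t_def .
  have ETe: "seidel_energy n (turan_edges n - {e}) = (2 * t - 3) + (s - 3) * (2 * t - 1)
     + (t - 2) * (2 * s - 1) + (\<Sum>i<4. \<bar>\<rho> i\<bar>)"
    using energy_Te[OF assms(1) assms(2) exyz[unfolded a_def], of \<rho>, folded a_def, folded sN_def, OF rho']
    unfolding s_def t_def by simp
  have lin: "(real a - 1) * (2 * real (n - a) - 1) + (real (n - a) - 1) * (2 * real a - 1) = 4 * s * t - 3 * s - 3 * t + 2"
    using sa by (auto simp: algebra_simps)
  have "seidel_energy n (turan_edges n) = - 2 * \<nu>"
    unfolding ET lin using nm(2-4) by (simp add: \<rho>T_def cC1_def algebra_simps)
  moreover have "seidel_energy n (turan_edges n - {e}) = - 2 * \<rho> 0"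
    unfolding ETe using r(3-7) by (simp add: eval_nat_numeral lessThan_Suc cD3_def algebra_simps)
  ultimately show ?thesis using r(2) by simp
qed

end
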